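(* Let $d\ge 3$. (a) The subKautz digraph $sK(d,2)$ is antipodal and has mean distance $\overline{\partial^*}=\dfrac{2d^2+3d-1}{d^2+d}$. (b) The cyclic Kautz digraph $CK(d,3)$ has mean distance $\overline{\partial}=\dfrac{3d^3+d^2-5d-2}{d^3-d}$.
   Context: SubKautz digraph $sK(d,2)$: vertices $x_1x_2$ with $x_1\neq x_2$ in $\mathbb Z_{d+1}$; arcs $x_1x_2\to x_2x_3$ for $x_3\neq x_1,x_2$. Cyclic Kautz digraph $CK(d,3)$: vertices $x_1x_2x_3\in\mathbb Z_{d+1}^3$ with $x_1,x_2,x_3$ pairwise distinct; arcs $x_1x_2x_3\to x_2x_3y$ for $y\neq x_2,x_3$. The mean distance of a digraph $G$ on $N$ vertices is $\frac{1}{N^2}\sum_{u,v\in V(G)}\mathrm{dist}(u,v)$ (pairs with $u=v$ included, contributing $0$); for a vertex-transitive digraph this equals $\frac1N\sum_{v}\mathrm{dist}(u,v)$ for any fixed $u$. A digraph is antipodal if every vertex $u$ has exactly one vertex $v$ at distance equal to the diameter from $u$, and simultaneously $u$ is at distance equal to the diameter from $v$. *)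

theory Defs
  imports Complex_Main
begin

text \<open>Distance = length of a shortest directed walk (all digraphs considered here
  are strongly connected, so the LEAST is well defined).\<close>

definition dg_dist :: "('a \<times> 'a) set \<Rightarrow> 'a \<Rightarrow> 'a \<Rightarrow> nat" where
  "dg_dist A u v = (LEAST n. (u, v) \<in> A ^^ n)"

definition mean_distance :: "'a set \<Rightarrow> ('a \<times> 'a) set \<Rightarrow> real" where
  "mean_distance V A =
     (\<Sum>u\<in>V. \<Sum>v\<in>V. real (dg_dist A u v)) / (real (card V))^2"

definition diameter :: "'a set \<Rightarrow> ('a \<times> 'a) set \<Rightarrow> nat" where
  "diameter V A = Max {dg_dist A u v | u v. u \<in> V \<and> v \<in> V}"

definition antipodal :: "'a set \<Rightarrow> ('a \<times> 'a) set \<Rightarrow> bool" where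
  "antipodal V A \<longleftrightarrow>
     (\<forall>u\<in>V. \<exists>v\<in>V. dg_dist A u v = diameter V A \<and> dg_dist A v u = diameter V A
        \<and> (\<forall>w\<in>V. dg_dist A u w = diameter V A \<longrightarrow> w = v))"

text \<open>SubKautz digraph sK(d,2); Z_{d+1} is represented by {0..d}.\<close>
definition sK2_verts :: "nat \<Rightarrow> (nat \<times> nat) set" where
  "sK2_verts d = {(x1, x2). x1 \<le> d \<and> x2 \<le> d \<and> x1 \<noteq> x2}"

definition sK2_arcs :: "nat \<Rightarrow> ((nat \<times> nat) \<times> (nat \<times> nat)) set" where
  "sK2_arcs d = {((x1, x2), (y1, y2)). (x1, x2) \<in> sK2_verts d \<and> (y1, y2) \<in> sK2_verts d
      \<and> y1 = x2 \<and> y2 \<noteq> x1 \<and> y2 \<noteq> x2}"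

definition CK3_verts :: "nat \<Rightarrow> (nat \<times> nat \<times> nat) set" where
  "CK3_verts d = {(x1, x2, x3). x1 \<le> d \<and> x2 \<le> d \<and> x3 \<le> d
      \<and> x1 \<noteq> x2 \<and> x1 \<noteq> x3 \<and> x2 \<noteq> x3}"

definition CK3_arcs :: "nat \<Rightarrow> ((nat \<times> nat \<times> nat) \<times> (nat \<times> nat \<times> nat)) set" where
  "CK3_arcs d = {((x1, x2, x3), (y1, y2, y3)). (x1, x2, x3) \<in> CK3_verts d
      \<and> (y1, y2, y3) \<in> CK3_verts d \<and> y1 = x2 \<and> y2 = x3}"

end

theory Submission imports Defs begin

lemma dist_eqI:
  assumes "(u,v) \<in> A ^^ n" and "\<And>m. m < n \<Longrightarrow> (u,v) \<notin> A ^^ m"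
  shows "dg_dist A u v = n"
  unfolding dg_dist_def
  by (rule Least_equality) (use assms in \<open>auto simp: not_less[symmetric]\<close>)

lemma pow_SucD: "(x,z) \<in> R ^^ Suc n \<Longrightarrow> \<exists>y. (x,y) \<in> R ^^ n \<and> (y,z) \<in> R"
  by auto

lemma pow_SucI: "(x,y) \<in> R ^^ n \<Longrightarrow> (y,z) \<in> R \<Longrightarrow> (x,z) \<in> R ^^ Suc n"
  by auto

lemma fresh3: fixes d :: nat assumes "d \<ge> 3" shows "\<exists>y\<le>d. y \<noteq> a \<and> y \<noteq> b \<and> y \<noteq> c"
proof (rule ccontr)
  assume "\<not> ?thesis"
  hence "{..d} \<subseteq> {a,b,c}" by auto
  hence "card {..d} \<le> card {a,b,c}" by (intro card_mono) auto
  also have "\<dots> \<le> 3" by (simp add: card_insert_le_m1 card_insert_if)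
  finally show False using assms by simp
qed

lemma sK_arc: "((x1,x2),(y1,y2)) \<in> sK2_arcs d \<longleftrightarrow>
   x1 \<le> d \<and> x2 \<le> d \<and> x1 \<noteq> x2 \<and> y1 = x2 \<and> y2 \<le> d \<and> y2 \<noteq> x1 \<and> y2 \<noteq> x2"
  by (auto simp: sK2_arcs_def sK2_verts_def)

lemma sK_p1: "((a,b),(c,e)) \<in> sK2_arcs d ^^ Suc 0 \<Longrightarrow> c = b \<and> e \<noteq> a"
  by (auto simp: sK_arc)
lemma sK_p2: "((a,b),(c,e)) \<in> sK2_arcs d ^^ Suc (Suc 0) \<Longrightarrow> c \<noteq> a \<and> c \<noteq> b \<and> e \<noteq> b"
  by (auto simp: sK_arc relcomp_unfold)
lemma sK_p3: "((a,b),(c,e)) \<in> sK2_arcs d ^^ Suc (Suc (Suc 0)) \<Longrightarrow> c \<noteq> b"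
proof -
  assume "((a,b),(c,e)) \<in> sK2_arcs d ^^ Suc (Suc (Suc 0))"
  then obtain w where "((a,b),w) \<in> sK2_arcs d ^^ Suc (Suc 0)" "(w,(c,e)) \<in> sK2_arcs d"
    by (blast dest: pow_SucD)
  then show ?thesis by (cases w) (auto dest!: sK_p2 simp: sK_arc)
qed

definition sKf :: "nat \<Rightarrow> nat \<Rightarrow> nat \<Rightarrow> nat \<Rightarrow> nat" where
  "sKf a b c e = (if c = a \<and> e = b then 0 else if c = b \<and> e \<noteq> a then 1
     else if c \<noteq> a \<and> c \<noteq> b \<and> e \<noteq> b then 2 else if c = b \<and> e = a then 4 else 3)"

lemma lt4: "(m::nat) < 4 \<Longrightarrow> m = 0 \<or> m = Suc 0 \<or> m = Suc (Suc 0) \<or> m = Suc (Suc (Suc 0))" by auto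
lemma lt5: "(m::nat) < 5 \<Longrightarrow> m = 0 \<or> m = Suc 0 \<or> m = Suc (Suc 0) \<or> m = Suc (Suc (Suc 0)) \<or> m = 4" by auto

lemma sK_dist:
  assumes d: "d \<ge> 3" and u: "(a,b) \<in> sK2_verts d" and v: "(c,e) \<in> sK2_verts d"
  shows "dg_dist (sK2_arcs d) (a,b) (c,e) = sKf a b c e"
proof -
  let ?A = "sK2_arcs d"
  have ab: "a \<le> d" "b \<le> d" "a \<noteq> b" "c \<le> d" "e \<le> d" "c \<noteq> e" using u v by (auto simp: sK2_verts_def)
  consider "c = a" "e = b" | "c = b" "e \<noteq> a" | "c \<noteq> a" "c \<noteq> b" "e \<noteq> b" | "c = b" "e = a"
    | "c = a" "e \<noteq> b" | "c \<noteq> a" "c \<noteq> b" "e = b" by blast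
  then show ?thesis
  proof cases
    case 1 then show ?thesis by (simp add: sKf_def dg_dist_def)
  next
    case 2
    have "((a,b),(c,e)) \<in> ?A ^^ Suc 0" using 2 ab by (auto simp: sK_arc)
    then have "dg_dist ?A (a,b) (c,e) = 1"
      by (intro dist_eqI) (use 2 ab in auto)
    then show ?thesis using 2 by (simp add: sKf_def)
  next
    case 3
    have "((a,b),(c,e)) \<in> ?A ^^ Suc (Suc 0)"
      by (rule pow_SucI[where y="(b,c)"]) (use 3 ab in \<open>auto simp: sK_arc\<close>)
    then have "dg_dist ?A (a,b) (c,e) = Suc (Suc 0)"
      by (rule dist_eqI) (use 3 ab in \<open>auto dest: sK_p1 simp: less_Suc_eq numeral_2_eq_2\<close>)
    then show ?thesis using 3 by (simp add: sKf_def)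
  next
    case 4
    obtain x where x: "x \<le> d" "x \<noteq> a" "x \<noteq> b" "x \<noteq> b" using fresh3[OF d] by blast
    obtain y where y: "y \<le> d" "y \<noteq> a" "y \<noteq> b" "y \<noteq> x" using fresh3[OF d] by blast
    have "((a,b),(c,e)) \<in> ?A ^^ Suc (Suc (Suc (Suc 0)))"
      apply (rule pow_SucI[where y="(y,b)"])
      apply (rule pow_SucI[where y="(x,y)"])
      apply (rule pow_SucI[where y="(b,x)"])
      using 4 ab x y by (auto simp: sK_arc)
    then have "dg_dist ?A (a,b) (c,e) = Suc (Suc (Suc (Suc 0)))"
      by (rule dist_eqI) (use 4 ab in \<open>auto simp: less_Suc_eq dest!: sK_p1 sK_p2 sK_p3\<close>)
    then show ?thesis using 4 ab by (simp add: sKf_def)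
  next
    case 5
    obtain x where x: "x \<le> d" "x \<noteq> a" "x \<noteq> b" "x \<noteq> e" using fresh3[OF d] by blast
    have "((a,b),(c,e)) \<in> ?A ^^ Suc (Suc (Suc 0))"
      apply (rule pow_SucI[where y="(x,a)"])
      apply (rule pow_SucI[where y="(b,x)"])
      using 5 ab x by (auto simp: sK_arc)
    then have "dg_dist ?A (a,b) (c,e) = Suc (Suc (Suc 0))"
      by (rule dist_eqI) (use 5 ab in \<open>auto simp: less_Suc_eq dest!: sK_p1 sK_p2\<close>)
    then show ?thesis using 5 ab by (simp add: sKf_def)
  next
    case 6
    obtain x where x: "x \<le> d" "x \<noteq> a" "x \<noteq> b" "x \<noteq> c" using fresh3[OF d] by blast
    have "((a,b),(c,e)) \<in> ?A ^^ Suc (Suc (Suc 0))"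
      apply (rule pow_SucI[where y="(x,c)"])
      apply (rule pow_SucI[where y="(b,x)"])
      using 6 ab x by (auto simp: sK_arc)
    then have "dg_dist ?A (a,b) (c,e) = Suc (Suc (Suc 0))"
      by (rule dist_eqI) (use 6 ab in \<open>auto simp: less_Suc_eq dest!: sK_p1 sK_p2\<close>)
    then show ?thesis using 6 ab by (simp add: sKf_def)
  qed
qed

lemma one_point:
  fixes f :: "nat \<Rightarrow> real"
  assumes "\<And>e. e \<le> d \<Longrightarrow> f e = (if e = a then x else z)" "a \<le> d"
  shows "sum f {..d} = x + real d * z"
proof -
  have "sum f {..d} = f a + sum f ({..d} - {a})" by (rule sum.remove) (use assms(2) in auto)
  also have "sum f ({..d} - {a}) = sum (\<lambda>_. z) ({..d} - {a})" by (rule sum.cong) (auto simp: assms(1))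
  also have "\<dots> = real d * z" using assms(2) by simp
  finally show ?thesis using assms by simp
qed

lemma two_point:
  fixes f :: "nat \<Rightarrow> real"
  assumes "\<And>e. e \<le> d \<Longrightarrow> f e = (if e = a then x else if e = b then y else z)" "a \<le> d" "b \<le> d" "a \<noteq> b"
  shows "sum f {..d} = x + y + (real d - 1) * z"
proof -
  have "sum f {..d} = f a + sum f ({..d} - {a})" by (rule sum.remove) (use assms(2) in auto)
  also have "sum f ({..d} - {a}) = f b + sum f ({..d} - {a} - {b})" by (rule sum.remove) (use assms(2-4) in auto)
  also have "sum f ({..d} - {a} - {b}) = sum (\<lambda>_. z) ({..d} - {a} - {b})" by (rule sum.cong) (auto simp: assms(1))
  also have "\<dots> = real (d - 1) * z" using assms by (simp add: card_Diff_singleton_if)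
  finally show ?thesis using assms by (simp add: of_nat_diff)
qed

lemma sK_verts_Sigma: "sK2_verts d = Sigma {..d} (\<lambda>c. {e \<in> {..d}. c \<noteq> e})"
  by (auto simp: sK2_verts_def)

lemma sum_sK: "(\<Sum>x\<in>sK2_verts d. (F x :: real)) = (\<Sum>c\<le>d. \<Sum>e\<le>d. if c \<noteq> e then F (c,e) else 0)"
proof -
  have "(\<Sum>x\<in>sK2_verts d. F x) = (\<Sum>c\<le>d. \<Sum>e\<in>{e \<in> {..d}. c \<noteq> e}. F (c,e))"
    unfolding sK_verts_Sigma by (subst sum.Sigma) auto
  also have "\<dots> = (\<Sum>c\<le>d. \<Sum>e\<le>d. if c \<noteq> e then F (c,e) else 0)"
    by (rule sum.cong[OF refl], rule sum.inter_filter, simp)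
  finally show ?thesis .
qed

lemma sK_card: "real (card (sK2_verts d)) = real d ^ 2 + real d"
proof -
  have "real (card (sK2_verts d)) = (\<Sum>x\<in>sK2_verts d. 1)" by simp
  also have "\<dots> = (\<Sum>c\<le>d. \<Sum>e\<le>d. if c \<noteq> e then 1 else 0)" by (rule sum_sK)
  also have "\<dots> = (\<Sum>c\<le>d. real d)"
  proof (rule sum.cong[OF refl])
    fix c assume "c \<in> {..d}"
    then have "(\<Sum>e\<le>d. if c \<noteq> e then 1 else 0) = 0 + real d * (1::real)"
      by (intro one_point) auto
    then show "(\<Sum>e\<le>d. if c \<noteq> e then 1 else 0) = real d" by simp
  qed
  also have "\<dots> = real d ^ 2 + real d" by (simp add: power2_eq_square algebra_simps)
  finally show ?thesis .
qed

lemma sK_row: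
  assumes d: "d \<ge> 3" and u: "(a,b) \<in> sK2_verts d"
  shows "(\<Sum>v\<in>sK2_verts d. real (dg_dist (sK2_arcs d) (a,b) v)) = 2 * real d ^ 2 + 3 * real d - 1"
proof -
  have ab: "a \<le> d" "b \<le> d" "a \<noteq> b" using u by (auto simp: sK2_verts_def)
  have "(\<Sum>v\<in>sK2_verts d. real (dg_dist (sK2_arcs d) (a,b) v))
      = (\<Sum>c\<le>d. \<Sum>e\<le>d. if c \<noteq> e then real (dg_dist (sK2_arcs d) (a,b) (c,e)) else 0)"
    by (rule sum_sK)
  also have "\<dots> = (\<Sum>c\<le>d. \<Sum>e\<le>d. if c \<noteq> e then real (sKf a b c e) else 0)"
    by (intro sum.cong refl) (auto simp: sK_dist[OF d u] sK2_verts_def)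
  also have "\<dots> = (\<Sum>c\<le>d. if c = a then (real d - 1) * 3 else if c = b then 4 + (real d - 1)
                       else 3 + (real d - 1) * 2)"
  proof (rule sum.cong[OF refl])
    fix c assume c: "c \<in> {..d}"
    consider "c = a" | "c = b" | "c \<noteq> a" "c \<noteq> b" by blast
    then show "(\<Sum>e\<le>d. if c \<noteq> e then real (sKf a b c e) else 0) = (if c = a then (real d - 1) * 3 else if c = b then 4 + (real d - 1)
                       else 3 + (real d - 1) * 2)"
    proof cases
      case 1 then show ?thesis using ab
        by (subst two_point[where a=a and b=b and x=0 and y=0 and z=3]) (auto simp: sKf_def)
    next
      case 2 then show ?thesis using ab
        by (subst two_point[where a=b and b=a and x=0 and y=4 and z=1]) (auto simp: sKf_def)
    next
      case 3 then show ?thesis using ab c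
        by (subst two_point[where a=c and b=b and x=0 and y=3 and z=2]) (auto simp: sKf_def)
    qed
  qed
  also have "\<dots> = (real d - 1) * 3 + (4 + (real d - 1)) + (real d - 1) * (3 + (real d - 1) * 2)"
    using ab by (subst two_point[where a=a and b=b]) auto
  also have "\<dots> = 2 * real d ^ 2 + 3 * real d - 1" by (simp add: power2_eq_square algebra_simps)
  finally show ?thesis .
qed

lemma mean_const:
  fixes V :: "'a set" and A
  assumes "\<And>u. u \<in> V \<Longrightarrow> (\<Sum>v\<in>V. real (dg_dist A u v)) = S" and "real (card V) = N" and "N > 0"
  shows "mean_distance V A = S / N"
proof -
  have "(\<Sum>u\<in>V. \<Sum>v\<in>V. real (dg_dist A u v)) = (\<Sum>u\<in>V. S)" by (rule sum.cong) (auto simp: assms(1))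
  also have "\<dots> = N * S" using assms(2) by simp
  finally show ?thesis unfolding mean_distance_def using assms(2,3) by (simp add: power2_eq_square)
qed

lemma sK_mean:
  assumes d: "d \<ge> 3"
  shows "mean_distance (sK2_verts d) (sK2_arcs d) = (2 * real d ^ 2 + 3 * real d - 1) / (real d ^ 2 + real d)"
proof (rule mean_const)
  fix u assume "u \<in> sK2_verts d"
  then show "(\<Sum>v\<in>sK2_verts d. real (dg_dist (sK2_arcs d) u v)) = 2 * real d ^ 2 + 3 * real d - 1"
    using sK_row[OF d] by (cases u) auto
qed (use d sK_card in \<open>auto intro: add_nonneg_pos\<close>)

lemma sKf_le: "sKf a b c e \<le> 4" by (simp add: sKf_def)

lemma sK_diam: assumes d: "d \<ge> 3" shows "diameter (sK2_verts d) (sK2_arcs d) = 4"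
  unfolding diameter_def
proof (rule Max_eqI)
  let ?S = "{dg_dist (sK2_arcs d) u v |u v. u \<in> sK2_verts d \<and> v \<in> sK2_verts d}"
  have "?S \<subseteq> {..4}"
  proof
    fix x assume "x \<in> ?S"
    then obtain a b c e where "(a,b) \<in> sK2_verts d" "(c,e) \<in> sK2_verts d" "x = dg_dist (sK2_arcs d) (a,b) (c,e)" by auto
    then show "x \<in> {..4}" using sK_dist[OF d] sKf_le by auto
  qed
  then show "finite ?S" by (rule finite_subset) auto
  show "\<And>y. y \<in> ?S \<Longrightarrow> y \<le> 4" using \<open>?S \<subseteq> {..4}\<close> by (meson atMost_iff subsetD)
  have "(0,1) \<in> sK2_verts d" "(1,0) \<in> sK2_verts d" using d by (auto simp: sK2_verts_def)
  moreover have "dg_dist (sK2_arcs d) (0,1) (1,0) = 4" using sK_dist[OF d] calculation by (simp add: sKf_def)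
  ultimately show "4 \<in> ?S" by force
qed

lemma sK_antipodal: assumes d: "d \<ge> 3" shows "antipodal (sK2_verts d) (sK2_arcs d)"
  unfolding antipodal_def sK_diam[OF d]
proof
  fix u assume u: "u \<in> sK2_verts d"
  obtain a b where ab: "u = (a,b)" by (cases u)
  have v: "(b,a) \<in> sK2_verts d" using u ab by (auto simp: sK2_verts_def)
  show "\<exists>v\<in>sK2_verts d. dg_dist (sK2_arcs d) u v = 4 \<and> dg_dist (sK2_arcs d) v u = 4 \<and>
             (\<forall>w\<in>sK2_verts d. dg_dist (sK2_arcs d) u w = 4 \<longrightarrow> w = v)"
  proof (intro bexI[OF _ v] conjI ballI impI)
    show "dg_dist (sK2_arcs d) u (b, a) = 4" using sK_dist[OF d] u v ab by (simp add: sKf_def sK2_verts_def)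
    show "dg_dist (sK2_arcs d) (b, a) u = 4" using sK_dist[OF d] u v ab by (simp add: sKf_def sK2_verts_def)
    fix w assume w: "w \<in> sK2_verts d" "dg_dist (sK2_arcs d) u w = 4"
    then show "w = (b,a)" using sK_dist[OF d] u ab by (cases w) (auto simp: sKf_def split: if_splits)
  qed
qed

lemma CK_arc: "((x1,x2,x3),(y1,y2,y3)) \<in> CK3_arcs d \<longleftrightarrow>
   x1 \<le> d \<and> x2 \<le> d \<and> x3 \<le> d \<and> x1 \<noteq> x2 \<and> x1 \<noteq> x3 \<and> x2 \<noteq> x3
   \<and> y1 = x2 \<and> y2 = x3 \<and> y3 \<le> d \<and> y3 \<noteq> x2 \<and> y3 \<noteq> x3"
  by (auto simp: CK3_arcs_def CK3_verts_def)

lemma CK_p1: "((a,b,c),(p,q,r)) \<in> CK3_arcs d ^^ Suc 0 \<Longrightarrow> p = b \<and> q = c"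
  by (auto simp: CK_arc)
lemma CK_p2: "((a,b,c),(p,q,r)) \<in> CK3_arcs d ^^ Suc (Suc 0) \<Longrightarrow> p = c \<and> q \<noteq> b \<and> q \<noteq> c"
proof -
  assume "((a,b,c),(p,q,r)) \<in> CK3_arcs d ^^ Suc (Suc 0)"
  then obtain w where "((a,b,c),w) \<in> CK3_arcs d ^^ Suc 0" "(w,(p,q,r)) \<in> CK3_arcs d"
    by (blast dest: pow_SucD)
  then show ?thesis by (cases w) (auto dest!: CK_p1 simp: CK_arc)
qed
lemma CK_p3: "((a,b,c),(p,q,r)) \<in> CK3_arcs d ^^ Suc (Suc (Suc 0)) \<Longrightarrow> p \<noteq> b \<and> p \<noteq> c \<and> q \<noteq> c"
proof -
  assume "((a,b,c),(p,q,r)) \<in> CK3_arcs d ^^ Suc (Suc (Suc 0))"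
  then obtain w where "((a,b,c),w) \<in> CK3_arcs d ^^ Suc (Suc 0)" "(w,(p,q,r)) \<in> CK3_arcs d"
    by (blast dest: pow_SucD)
  then show ?thesis by (cases w) (auto dest!: CK_p2 simp: CK_arc)
qed
lemma CK_p4: "((a,b,c),(p,q,r)) \<in> CK3_arcs d ^^ Suc (Suc (Suc (Suc 0))) \<Longrightarrow> p \<noteq> c"
proof -
  assume "((a,b,c),(p,q,r)) \<in> CK3_arcs d ^^ Suc (Suc (Suc (Suc 0)))"
  then obtain w where "((a,b,c),w) \<in> CK3_arcs d ^^ Suc (Suc (Suc 0))" "(w,(p,q,r)) \<in> CK3_arcs d"
    by (blast dest: pow_SucD)
  then show ?thesis by (cases w) (auto dest!: CK_p3 simp: CK_arc)
qed

definition CKf :: "nat \<Rightarrow> nat \<Rightarrow> nat \<Rightarrow> nat \<Rightarrow> nat" where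
  "CKf b c p q = (if p = b then (if q = c then 1 else 4) else if p = c then (if q = b then 5 else 2)
      else (if q = c then 4 else 3))"

lemma CK_dist:
  assumes d: "d \<ge> 3" and u: "(a,b,c) \<in> CK3_verts d" and v: "(p,q,r) \<in> CK3_verts d"
  shows "dg_dist (CK3_arcs d) (a,b,c) (p,q,r) = (if (p,q,r) = (a,b,c) then 0 else CKf b c p q)"
proof -
  let ?A = "CK3_arcs d"
  have ab: "a \<le> d" "b \<le> d" "c \<le> d" "a \<noteq> b" "a \<noteq> c" "b \<noteq> c"
    "p \<le> d" "q \<le> d" "r \<le> d" "p \<noteq> q" "p \<noteq> r" "q \<noteq> r" using u v by (auto simp: CK3_verts_def)
  consider "(p,q,r) = (a,b,c)" | "p = b" "q = c" | "p = c" "q \<noteq> b"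
    | "p \<noteq> b" "p \<noteq> c" "q \<noteq> c" "(p,q,r) \<noteq> (a,b,c)" | "p = b" "q \<noteq> c"
    | "p \<noteq> b" "p \<noteq> c" "q = c" | "p = c" "q = b" by blast
  then show ?thesis
  proof cases
    case 1 then show ?thesis by (simp add: dg_dist_def)
  next
    case 2
    have "((a,b,c),(p,q,r)) \<in> ?A ^^ Suc 0" using 2 ab by (auto simp: CK_arc)
    then have "dg_dist ?A (a,b,c) (p,q,r) = Suc 0"
      by (rule dist_eqI) (use 2 ab in auto)
    then show ?thesis using 2 ab by (simp add: CKf_def)
  next
    case 3
    have "((a,b,c),(p,q,r)) \<in> ?A ^^ Suc (Suc 0)"
      by (rule pow_SucI[where y="(b,c,q)"]) (use 3 ab in \<open>auto simp: CK_arc\<close>)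
    then have "dg_dist ?A (a,b,c) (p,q,r) = Suc (Suc 0)"
      by (rule dist_eqI) (use 3 ab in \<open>auto dest!: CK_p1 simp: less_Suc_eq\<close>)
    then show ?thesis using 3 ab by (simp add: CKf_def)
  next
    case 4
    have "((a,b,c),(p,q,r)) \<in> ?A ^^ Suc (Suc (Suc 0))"
      apply (rule pow_SucI[where y="(c,p,q)"])
      apply (rule pow_SucI[where y="(b,c,p)"])
      using 4 ab by (auto simp: CK_arc)
    then have "dg_dist ?A (a,b,c) (p,q,r) = Suc (Suc (Suc 0))"
      by (rule dist_eqI) (use 4 ab in \<open>auto dest!: CK_p1 CK_p2 simp: less_Suc_eq\<close>)
    then show ?thesis using 4 ab by (simp add: CKf_def)
  next
    case 5
    obtain y where y: "y \<le> d" "y \<noteq> b" "y \<noteq> c" "y \<noteq> q" using fresh3[OF d] by blast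
    have "((a,b,c),(p,q,r)) \<in> ?A ^^ Suc (Suc (Suc (Suc 0)))"
      apply (rule pow_SucI[where y="(y,p,q)"])
      apply (rule pow_SucI[where y="(c,y,p)"])
      apply (rule pow_SucI[where y="(b,c,y)"])
      using 5 ab y by (auto simp: CK_arc)
    then have "dg_dist ?A (a,b,c) (p,q,r) = Suc (Suc (Suc (Suc 0)))"
      by (rule dist_eqI) (use 5 ab in \<open>auto dest!: CK_p1 CK_p2 CK_p3 simp: less_Suc_eq\<close>)
    then show ?thesis using 5 ab by (simp add: CKf_def)
  next
    case 6
    obtain y where y: "y \<le> d" "y \<noteq> b" "y \<noteq> c" "y \<noteq> p" using fresh3[OF d] by blast
    have "((a,b,c),(p,q,r)) \<in> ?A ^^ Suc (Suc (Suc (Suc 0)))"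
      apply (rule pow_SucI[where y="(y,p,q)"])
      apply (rule pow_SucI[where y="(c,y,p)"])
      apply (rule pow_SucI[where y="(b,c,y)"])
      using 6 ab y by (auto simp: CK_arc)
    then have "dg_dist ?A (a,b,c) (p,q,r) = Suc (Suc (Suc (Suc 0)))"
      by (rule dist_eqI) (use 6 ab in \<open>auto dest!: CK_p1 CK_p2 CK_p3 simp: less_Suc_eq\<close>)
    then show ?thesis using 6 ab by (simp add: CKf_def)
  next
    case 7
    obtain z where z: "z \<le> d" "z \<noteq> a" "z \<noteq> b" "z \<noteq> c" using fresh3[OF d] by blast
    have "((a,b,c),(p,q,r)) \<in> ?A ^^ Suc (Suc (Suc (Suc (Suc 0))))"
      apply (rule pow_SucI[where y="(z,c,b)"])
      apply (rule pow_SucI[where y="(a,z,c)"])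
      apply (rule pow_SucI[where y="(c,a,z)"])
      apply (rule pow_SucI[where y="(b,c,a)"])
      using 7 ab z by (auto simp: CK_arc)
    then have "dg_dist ?A (a,b,c) (p,q,r) = Suc (Suc (Suc (Suc (Suc 0))))"
      by (rule dist_eqI) (use 7 ab in \<open>auto dest!: CK_p1 CK_p2 CK_p3 CK_p4 simp: less_Suc_eq\<close>)
    then show ?thesis using 7 ab by (simp add: CKf_def)
  qed
qed

lemma CK_verts_Sigma: "CK3_verts d = Sigma {..d} (\<lambda>p. Sigma {..d} (\<lambda>q. {r \<in> {..d}. p \<noteq> q \<and> p \<noteq> r \<and> q \<noteq> r}))"
  by (auto simp: CK3_verts_def)

lemma sum_CK: "(\<Sum>x\<in>CK3_verts d. (F x :: real)) =
   (\<Sum>p\<le>d. \<Sum>q\<le>d. \<Sum>r\<le>d. if p \<noteq> q \<and> p \<noteq> r \<and> q \<noteq> r then F (p,q,r) else 0)"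
proof -
  have "(\<Sum>x\<in>CK3_verts d. F x) = (\<Sum>p\<le>d. \<Sum>y\<in>Sigma {..d} (\<lambda>q. {r \<in> {..d}. p \<noteq> q \<and> p \<noteq> r \<and> q \<noteq> r}). F (p,y))"
    unfolding CK_verts_Sigma by (subst sum.Sigma) auto
  also have "\<dots> = (\<Sum>p\<le>d. \<Sum>q\<le>d. \<Sum>r\<in>{r \<in> {..d}. p \<noteq> q \<and> p \<noteq> r \<and> q \<noteq> r}. F (p,q,r))"
    by (rule sum.cong[OF refl]) (subst sum.Sigma; auto)
  also have "\<dots> = (\<Sum>p\<le>d. \<Sum>q\<le>d. \<Sum>r\<le>d. if p \<noteq> q \<and> p \<noteq> r \<and> q \<noteq> r then F (p,q,r) else 0)"
    by (rule sum.cong[OF refl], rule sum.cong[OF refl], rule sum.inter_filter, simp)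
  finally show ?thesis .
qed

lemma inner_r:
  fixes G :: real
  assumes "p \<le> d" "q \<le> d"
  shows "(\<Sum>r\<le>d. if p \<noteq> q \<and> p \<noteq> r \<and> q \<noteq> r then G else 0) = (if p = q then 0 else (real d - 1) * G)"
proof (cases "p = q")
  case True then show ?thesis by simp
next
  case False
  have "(\<Sum>r\<le>d. if p \<noteq> q \<and> p \<noteq> r \<and> q \<noteq> r then G else 0) = 0 + 0 + (real d - 1) * G"
    by (rule two_point[where a=p and b=q]) (use False assms in auto)
  then show ?thesis using False by simp
qed

lemma CK_card: "real (card (CK3_verts d)) = real d ^ 3 - real d"
proof -
  have "real (card (CK3_verts d)) = (\<Sum>x\<in>CK3_verts d. 1)" by simp
  also have "\<dots> = (\<Sum>p\<le>d. \<Sum>q\<le>d. \<Sum>r\<le>d. if p \<noteq> q \<and> p \<noteq> r \<and> q \<noteq> r then 1 else 0)" by (rule sum_CK)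
  also have "\<dots> = (\<Sum>p\<le>d. \<Sum>q\<le>d. if p = q then 0 else (real d - 1) * 1)"
    by (intro sum.cong refl inner_r) auto
  also have "\<dots> = (\<Sum>p\<le>d. 0 + real d * (real d - 1))"
  proof (rule sum.cong[OF refl])
    fix p assume "p \<in> {..d}"
    then show "(\<Sum>q\<le>d. if p = q then 0 else (real d - 1) * 1) = 0 + real d * (real d - 1)"
      by (intro one_point[where a=p]) auto
  qed
  also have "\<dots> = real d ^ 3 - real d" by (simp add: power3_eq_cube algebra_simps)
  finally show ?thesis .
qed

lemma CK_row:
  assumes d: "d \<ge> 3" and u: "(a,b,c) \<in> CK3_verts d"
  shows "(\<Sum>v\<in>CK3_verts d. real (dg_dist (CK3_arcs d) (a,b,c) v)) = 3 * real d ^ 3 + real d ^ 2 - 5 * real d - 2"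
proof -
  have ab: "a \<le> d" "b \<le> d" "c \<le> d" "a \<noteq> b" "a \<noteq> c" "b \<noteq> c" using u by (auto simp: CK3_verts_def)
  define K where "K = real d - 1"
  have "(\<Sum>v\<in>CK3_verts d. real (dg_dist (CK3_arcs d) (a,b,c) v))
      = (\<Sum>v\<in>CK3_verts d. real (CKf b c (fst v) (fst (snd v))) - (if v = (a,b,c) then 3 else 0))"
  proof (rule sum.cong[OF refl])
    fix v assume v: "v \<in> CK3_verts d"
    obtain p q r where pqr: "v = (p,q,r)" by (cases v)
    show "real (dg_dist (CK3_arcs d) (a,b,c) v) = real (CKf b c (fst v) (fst (snd v))) - (if v = (a,b,c) then 3 else 0)"
      using CK_dist[OF d u, of p q r] v pqr ab by (auto simp: CKf_def K_def)
  qed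
  also have "\<dots> = (\<Sum>v\<in>CK3_verts d. real (CKf b c (fst v) (fst (snd v)))) - 3"
  proof -
    have fin: "finite (CK3_verts d)" unfolding CK_verts_Sigma by auto
    show ?thesis using u fin by (simp add: sum_subtractf)
  qed
  also have "(\<Sum>v\<in>CK3_verts d. real (CKf b c (fst v) (fst (snd v))))
     = (\<Sum>p\<le>d. \<Sum>q\<le>d. \<Sum>r\<le>d. if p \<noteq> q \<and> p \<noteq> r \<and> q \<noteq> r then real (CKf b c p q) else 0)"
    using sum_CK[where F="\<lambda>v. real (CKf b c (fst v) (fst (snd v)))" and d=d] unfolding fst_conv snd_conv .
  also have "\<dots> = (\<Sum>p\<le>d. \<Sum>q\<le>d. if p = q then 0 else K * real (CKf b c p q))"
    unfolding K_def by (intro sum.cong refl inner_r) auto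
  also have "\<dots> = (\<Sum>p\<le>d. if p = b then 0 + K * 1 + K * (K * 4) else if p = c then 0 + K * 5 + K * (K * 2)
                       else 0 + K * 4 + K * (K * 3))"
  proof (rule sum.cong[OF refl])
    fix p assume p: "p \<in> {..d}"
    consider "p = b" | "p = c" | "p \<noteq> b" "p \<noteq> c" by blast
    then show "(\<Sum>q\<le>d. if p = q then 0 else K * real (CKf b c p q)) = (if p = b then 0 + K * 1 + K * (K * 4) else if p = c then 0 + K * 5 + K * (K * 2)
                       else 0 + K * 4 + K * (K * 3))"
    proof cases
      case 1 then show ?thesis using ab
        by (subst two_point[where a=b and b=c and x=0 and y="K*1" and z="K*4"]) (auto simp: CKf_def K_def)
    next
      case 2 then show ?thesis using ab
        by (subst two_point[where a=c and b=b and x=0 and y="K*5" and z="K*2"]) (auto simp: CKf_def K_def)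
    next
      case 3 then show ?thesis using ab p
        by (subst two_point[where a=p and b=c and x=0 and y="K*4" and z="K*3"]) (auto simp: CKf_def K_def)
    qed
  qed
  also have "\<dots> = (0 + K * 1 + K * (K * 4)) + (0 + K * 5 + K * (K * 2)) + (real d - 1) * (0 + K * 4 + K * (K * 3))"
    by (rule two_point[where a=b and b=c and x="0 + K * 1 + K * (K * 4)" and y="0 + K * 5 + K * (K * 2)" and z="0 + K * 4 + K * (K * 3)"]) (use ab in auto)
  finally show ?thesis unfolding K_def by (simp add: power2_eq_square power3_eq_cube algebra_simps)
qed

lemma CK_mean:
  assumes d: "d \<ge> 3"
  shows "mean_distance (CK3_verts d) (CK3_arcs d) = (3 * real d ^ 3 + real d ^ 2 - 5 * real d - 2) / (real d ^ 3 - real d)"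
proof (rule mean_const)
  fix u assume "u \<in> CK3_verts d"
  then show "(\<Sum>v\<in>CK3_verts d. real (dg_dist (CK3_arcs d) u v)) = 3 * real d ^ 3 + real d ^ 2 - 5 * real d - 2"
    using CK_row[OF d] by (cases u) auto
next
  have "real d ^ 3 - real d = real d * (real d * real d - 1)" by (simp add: power3_eq_cube algebra_simps)
  moreover have "real d * real d \<ge> 3 * 3" using d by (intro mult_mono) auto
  ultimately show "real d ^ 3 - real d > 0" using d by simp
qed (rule CK_card)

theorem mainTheorem15:
  fixes d :: nat
  assumes "d \<ge> 3"
  shows "antipodal (sK2_verts d) (sK2_arcs d)
       \<and> mean_distance (sK2_verts d) (sK2_arcs d)
           = (2 * real d ^ 2 + 3 * real d - 1) / (real d ^ 2 + real d)
       \<and> mean_distance (CK3_verts d) (CK3_arcs d)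
           = (3 * real d ^ 3 + real d ^ 2 - 5 * real d - 2) / (real d ^ 3 - real d)"
  using sK_antipodal[OF assms] sK_mean[OF assms] CK_mean[OF assms] by blast

end
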